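(* Let $G=(V,E)$ be a graph with $n=|V|$ vertices, let $k>0$ be an integer such that $G$ has at least one vertex cover of size at most $k$, and let $\mu$ be the population size, with $k\mu=o(\sqrt{n})$. Consider either the $(1_\mu+1_\mu)$ EA$_D$ or the $(\mu+\lambda)$ EA$_D$ with $\lambda\ge\mu$ (both described in the context), maximizing the total Hamming distance over populations of $\mu$ feasible individuals, where an individual is feasible iff it is a vertex cover of $G$ of size at most $k$, and where every offspring is produced by applying the jump-and-repair mutation operator to a parent from the current population. Then in each iteration, the probability that the algorithm obtains a population of feasible individuals with optimal diversity is at least $2^{-k\mu}(1-o(1))$ (with $o(1)$ as $n\to\infty$), and therefore the number of iterations until such a population is found is stochastically dominated by the geometric distribution $\mathrm{Geom}(2^{-k\mu}(1-o(1)))$.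
   Context: A vertex cover of $G=(V,E)$ is a set $C\subseteq V$ such that every edge has at least one endpoint in $C$. Subsets of $V$ are identified with bit strings of length $n$. For a population (multiset) $P=(x_1,\dots,x_\mu)$ the diversity is the total Hamming distance $D(P)=\sum_{1\le a<b\le\mu}H(x_a,x_b)$; a population of feasible individuals has optimal diversity if its $D$ value is the maximum over all populations of $\mu$ feasible individuals. Jump-and-repair mutation (input: parent cover $x$ with $|x|\le k$): Step 1: form $S\subseteq x$ by including each $v\in x$ independently with probability $1/2$ and set $y\gets x\setminus S$; Step 2: add to $y$ every vertex $u$ adjacent to some $v\in S$; Step 3: while $|y|<k$, add to $y$ a vertex chosen uniformly at random from $V\setminus y$. Output $y$. $(1_\mu+1_\mu)$ EA$_D$: starts from a population $P$ of $\mu$ feasible individuals; in each iteration it creates a population $P'$ of $\mu$ offspring, each independently generated by applying the mutation to a parent from $P$, and replaces $P$ by $P'$ if all individuals of $P'$ are feasible and $D(P')\ge D(P)$. $(\mu+\lambda)$ EA$_D$: starts from a population $P$ of $\mu$ feasible individuals; in each iteration it creates $\lambda$ offspring, each independently generated by applying the mutation to a parent from $P$, adds them to $P$, and then removes $\lambda$ individuals: using the modified fitness $g$ under which all feasible individuals are equally good and infeasible ones are worse, it first removes individuals of minimum $g$-value as long as the population size stays at least $\mu$, and if more individuals must still be removed among tied individuals of worst $g$-value, it removes a set of them whose removal leaves a population of maximum diversity $D$. (In particular, if at least $\mu$ feasible individuals are present, the new population is a size-$\mu$ sub-multiset of feasible individuals maximizing $D$ among such choices.) *)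

theory Defs
  imports "HOL-Probability.Probability" "HOL-Library.Landau_Symbols"
begin

definition graph :: "nat \<Rightarrow> nat set set \<Rightarrow> bool" where
  "graph n E \<longleftrightarrow> (\<forall>e\<in>E. \<exists>u v. e = {u, v} \<and> u \<noteq> v \<and> u < n \<and> v < n)"

definition vertex_cover :: "nat \<Rightarrow> nat set set \<Rightarrow> nat set \<Rightarrow> bool" where
  "vertex_cover n E C \<longleftrightarrow> C \<subseteq> {..<n} \<and> (\<forall>e\<in>E. e \<inter> C \<noteq> {})"

definition feasible :: "nat \<Rightarrow> nat set set \<Rightarrow> nat \<Rightarrow> nat set \<Rightarrow> bool" where
  "feasible n E k x \<longleftrightarrow> vertex_cover n E x \<and> card x \<le> k"

text \<open>Hamming distance of the bit strings identified with the subsets x, y of V.\<close>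
definition hamming :: "nat set \<Rightarrow> nat set \<Rightarrow> nat" where
  "hamming x y = card ((x - y) \<union> (y - x))"

text \<open>Populations are lists (order irrelevant); D sums over all pairs a < b.\<close>
definition diversity :: "nat set list \<Rightarrow> nat" where
  "diversity P = (\<Sum>b<length P. \<Sum>a<b. hamming (P ! a) (P ! b))"

definition feasible_pop :: "nat \<Rightarrow> nat set set \<Rightarrow> nat \<Rightarrow> nat set list \<Rightarrow> bool" where
  "feasible_pop n E k P \<longleftrightarrow> (\<forall>x\<in>set P. feasible n E k x)"

definition optimal_diversity :: "nat \<Rightarrow> nat set set \<Rightarrow> nat \<Rightarrow> nat set list \<Rightarrow> bool" where
  "optimal_diversity n E k P \<longleftrightarrow> feasible_pop n E k P \<and>
     (\<forall>Q. length Q = length P \<and> feasible_pop n E k Q \<longrightarrow> diversity Q \<le> diversity P)"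

definition fill_step :: "nat \<Rightarrow> nat \<Rightarrow> nat set \<Rightarrow> nat set pmf" where
  "fill_step n k y = (if card y < k \<and> {..<n} - y \<noteq> {}
      then map_pmf (\<lambda>u. insert u y) (pmf_of_set ({..<n} - y))
      else return_pmf y)"

text \<open>Step 3: the loop runs at most k times (each pass increases |y| by one),
  so k guarded passes implement it exactly.\<close>
definition fill :: "nat \<Rightarrow> nat \<Rightarrow> nat set \<Rightarrow> nat set pmf" where
  "fill n k y = ((\<lambda>p. bind_pmf p (fill_step n k)) ^^ k) (return_pmf y)"

definition jump_repair :: "nat \<Rightarrow> nat set set \<Rightarrow> nat \<Rightarrow> nat set \<Rightarrow> nat set pmf" where
  "jump_repair n E k x = do {
     f \<leftarrow> Pi_pmf x False (\<lambda>_. bernoulli_pmf (1/2));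
     let S = {v \<in> x. f v};
     let y = (x - S) \<union> {u. \<exists>v\<in>S. {u, v} \<in> E};
     fill n k y }"

primrec indep_list :: "'a pmf list \<Rightarrow> 'a list pmf" where
  "indep_list [] = return_pmf []"
| "indep_list (p # ps) = do { x \<leftarrow> p; xs \<leftarrow> indep_list ps; return_pmf (x # xs) }"

definition step_one :: "nat \<Rightarrow> nat set set \<Rightarrow> nat \<Rightarrow> nat set list \<Rightarrow> nat set list pmf" where
  "step_one n E k P = do {
     P' \<leftarrow> indep_list (map (jump_repair n E k) P);
     return_pmf (if feasible_pop n E k P' \<and> diversity P' \<ge> diversity P then P' else P) }"

definition select_candidates :: "nat \<Rightarrow> nat set set \<Rightarrow> nat \<Rightarrow> nat \<Rightarrow> nat set list \<Rightarrow> nat set list set" where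
  "select_candidates n E k \<mu> Pool =
     {Q. mset Q \<subseteq># mset Pool \<and> length Q = \<mu> \<and> feasible_pop n E k Q}"

definition select :: "nat \<Rightarrow> nat set set \<Rightarrow> nat \<Rightarrow> nat \<Rightarrow> nat set list \<Rightarrow> nat set list pmf" where
  "select n E k \<mu> Pool = pmf_of_set
     {Q \<in> select_candidates n E k \<mu> Pool.
        \<forall>Q'\<in>select_candidates n E k \<mu> Pool. diversity Q' \<le> diversity Q}"

definition step_plus :: "nat \<Rightarrow> nat set set \<Rightarrow> nat \<Rightarrow> nat \<Rightarrow> nat set list \<Rightarrow> nat set list pmf" where
  "step_plus n E k lam P = do {
     Off \<leftarrow> indep_list (replicate lam
            (do { i \<leftarrow> pmf_of_set {..<length P}; jump_repair n E k (P ! i) }));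
     select n E k (length P) (P @ Off) }"

definition run :: "('s \<Rightarrow> 's pmf) \<Rightarrow> nat \<Rightarrow> 's \<Rightarrow> 's pmf" where
  "run step t P = ((\<lambda>p. bind_pmf p step) ^^ t) (return_pmf P)"

end

theory Submission
  imports Defs
begin


lemma lb_bind:
  assumes "measure_pmf.prob p A \<ge> c1" "c2 \<ge> 0"
    "\<And>x. x \<in> set_pmf p \<Longrightarrow> x \<in> A \<Longrightarrow> measure_pmf.prob (f x) B \<ge> c2"
  shows "measure_pmf.prob (bind_pmf p f) B \<ge> c1 * c2"
proof -
  have "ennreal (c2 * measure_pmf.prob p A) = ennreal c2 * emeasure (measure_pmf p) A"
    by (simp add: measure_pmf.emeasure_eq_measure assms(2) ennreal_mult)
  also have "\<dots> = (\<integral>\<^sup>+x. ennreal c2 * indicator A x \<partial>measure_pmf p)"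
    by (subst nn_integral_cmult_indicator) auto
  also have "\<dots> \<le> (\<integral>\<^sup>+x. emeasure (measure_pmf (f x)) B \<partial>measure_pmf p)"
  proof (rule nn_integral_mono_AE)
    show "AE x in measure_pmf p. ennreal c2 * indicator A x \<le> emeasure (measure_pmf (f x)) B"
    proof (rule AE_pmfI)
      fix x assume x: "x \<in> set_pmf p"
      show "ennreal c2 * indicator A x \<le> emeasure (measure_pmf (f x)) B"
      proof (cases "x \<in> A")
        case True
        then show ?thesis using assms(3)[OF x True]
          by (simp add: measure_pmf.emeasure_eq_measure)
      qed simp
    qed
  qed
  also have "\<dots> = emeasure (measure_pmf (bind_pmf p f)) B" by simp
  also have "\<dots> = ennreal (measure_pmf.prob (bind_pmf p f) B)"
    by (simp add: measure_pmf.emeasure_eq_measure)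
  finally have "c2 * measure_pmf.prob p A \<le> measure_pmf.prob (bind_pmf p f) B"
    by (simp add: ennreal_le_iff)
  moreover have "c1 * c2 \<le> c2 * measure_pmf.prob p A"
    using assms(1,2) by (metis mult.commute mult_left_mono)
  ultimately show ?thesis by linarith
qed

lemma ub_bind:
  assumes "c \<ge> 0"
    "\<And>x. x \<in> set_pmf p \<Longrightarrow> x \<in> A \<Longrightarrow> measure_pmf.prob (f x) B \<le> c"
    "\<And>x. x \<in> set_pmf p \<Longrightarrow> x \<notin> A \<Longrightarrow> measure_pmf.prob (f x) B = 0"
  shows "measure_pmf.prob (bind_pmf p f) B \<le> c * measure_pmf.prob p A"
proof -
  have "ennreal (measure_pmf.prob (bind_pmf p f) B) = (\<integral>\<^sup>+x. emeasure (measure_pmf (f x)) B \<partial>measure_pmf p)"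
    by (simp only: measure_pmf.emeasure_eq_measure[symmetric] emeasure_bind_pmf)
  also have "\<dots> \<le> (\<integral>\<^sup>+x. ennreal c * indicator A x \<partial>measure_pmf p)"
  proof (rule nn_integral_mono_AE)
    show "AE x in measure_pmf p. emeasure (measure_pmf (f x)) B \<le> ennreal c * indicator A x"
    proof (rule AE_pmfI)
      fix x assume x: "x \<in> set_pmf p"
      show "emeasure (measure_pmf (f x)) B \<le> ennreal c * indicator A x"
      proof (cases "x \<in> A")
        case True
        then show ?thesis using assms(2)[OF x True]
          by (simp add: measure_pmf.emeasure_eq_measure ennreal_leI)
      next
        case False
        then show ?thesis using assms(3)[OF x False]
          by (simp add: measure_pmf.emeasure_eq_measure)
      qed
    qed
  qed
  also have "\<dots> = ennreal c * emeasure (measure_pmf p) A"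
    by (subst nn_integral_cmult_indicator) auto
  also have "\<dots> = ennreal (c * measure_pmf.prob p A)"
    by (simp add: measure_pmf.emeasure_eq_measure assms(1) ennreal_mult)
  finally show ?thesis
    by (simp add: ennreal_le_iff assms(1))
qed



definition okw :: "nat \<Rightarrow> nat set set \<Rightarrow> nat \<Rightarrow> nat set \<Rightarrow> nat set \<Rightarrow> bool" where
  "okw n E k z w \<longleftrightarrow> vertex_cover n E w \<and> card w \<le> k \<and> card z \<le> card w"

fun good :: "nat \<Rightarrow> nat set set \<Rightarrow> nat \<Rightarrow> nat set \<Rightarrow> nat set list \<Rightarrow> nat set list \<Rightarrow> bool" where
  "good n E k A [] ws = True"
| "good n E k A (z#zs) [] = False"
| "good n E k A (z#zs) (w#ws) = (okw n E k z w \<and> (w - z) \<inter> A = {} \<and> good n E k (A \<union> w) zs ws)"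

lemma good_props:
  assumes "good n E k A zs ws"
  shows "length zs \<le> length ws \<and> (\<forall>i<length zs. okw n E k (zs!i) (ws!i) \<and> (ws!i - zs!i) \<inter> A = {})
     \<and> (\<forall>i j. i < j \<longrightarrow> j < length zs \<longrightarrow> ws!i \<inter> (ws!j - zs!j) = {})"
  using assms
proof (induction zs arbitrary: A ws)
  case Nil
  then show ?case by simp
next
  case (Cons z zs)
  then obtain w ws' where ws: "ws = w # ws'" by (cases ws) auto
  with Cons.prems have h: "okw n E k z w" "(w - z) \<inter> A = {}" "good n E k (A \<union> w) zs ws'" by auto
  note IH = Cons.IH[OF h(3)]
  have A1: "length (z # zs) \<le> length ws" using IH ws by simp
  have A2: "okw n E k ((z # zs) ! i) (ws ! i) \<and> (ws ! i - (z # zs) ! i) \<inter> A = {}"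
    if i: "i < length (z # zs)" for i
  proof (cases i)
    case 0 then show ?thesis using h ws by simp
  next
    case (Suc i') then show ?thesis using IH ws i by auto
  qed
  have A3: "ws ! i \<inter> (ws ! j - (z # zs) ! j) = {}" if ij: "i < j" "j < length (z # zs)" for i j
  proof -
    obtain j' where j: "j = Suc j'" using ij by (cases j) auto
    show ?thesis
    proof (cases i)
      case 0 then show ?thesis using IH ws j ij by auto
    next
      case (Suc i') then show ?thesis using IH ws j ij by auto
    qed
  qed
  show ?case using A1 A2 A3 by blast
qed

lemma hamming_mono:
  assumes "finite w1" "finite w2" "finite z1" "finite z2" "card z1 \<le> card w1" "card z2 \<le> card w2"
    "w1 \<inter> w2 \<subseteq> z1 \<inter> z2"
  shows "hamming z1 z2 \<le> hamming w1 w2"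
proof -
  have h: "hamming x y = (card x - card (x \<inter> y)) + (card y - card (y \<inter> x))" if "finite x" "finite y" for x y
  proof -
    have "hamming x y = card (x - y) + card (y - x)"
      unfolding hamming_def using that by (subst card_Un_disjoint) auto
    then show ?thesis using that by (simp add: card_Diff_subset_Int)
  qed
  have c: "card (w1 \<inter> w2) \<le> card (z1 \<inter> z2)" using assms by (intro card_mono) auto
  have "card (w2 \<inter> w1) = card (w1 \<inter> w2)" "card (z2 \<inter> z1) = card (z1 \<inter> z2)" by (simp_all add: Int_commute)
  then show ?thesis using h[of z1 z2] h[of w1 w2] assms c by simp
qed

lemma vc_finite: "vertex_cover n E w \<Longrightarrow> finite w"
  unfolding vertex_cover_def using finite_subset by blast

lemma good_diversity:
  assumes "good n E k A zs ws" "\<Union>(set zs) \<subseteq> A" "\<forall>z\<in>set zs. finite z"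
  shows "diversity zs \<le> diversity (take (length zs) ws)"
    "feasible_pop n E k (take (length zs) ws)" "length (take (length zs) ws) = length zs"
proof -
  note g = good_props[OF assms(1)]
  show "length (take (length zs) ws) = length zs" using g by simp
  have inter: "ws!a \<inter> ws!b \<subseteq> zs!a \<inter> zs!b" if "a < b" "b < length zs" for a b
  proof
    fix x assume x: "x \<in> ws!a \<inter> ws!b"
    have "ws ! a \<inter> (ws ! b - zs ! b) = {}" using g that by blast
    then have "x \<in> zs!b" using x by blast
    then have "x \<in> A" using assms(2) that by (meson UnionI nth_mem subsetD)
    moreover have "(ws!a - zs!a) \<inter> A = {}" using g that by simp
    ultimately have "x \<in> zs!a" using x by blast
    then show "x \<in> zs!a \<inter> zs!b" using \<open>x \<in> zs!b\<close> by blast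
  qed
  have okk: "okw n E k (zs!i) (ws!i)" if "i < length zs" for i using g that by blast
  have hm: "hamming (zs!a) (zs!b) \<le> hamming (ws!a) (ws!b)" if "a < b" "b < length zs" for a b
    apply (rule hamming_mono)
    using okk[of a] okk[of b] that inter[OF that] assms(3) vc_finite
    by (auto simp: okw_def)
  then show "diversity zs \<le> diversity (take (length zs) ws)"
    unfolding diversity_def \<open>length (take (length zs) ws) = length zs\<close>
  proof (intro sum_mono)
    fix b a assume "b \<in> {..<length zs}" "a \<in> {..<b}"
    then show "hamming (zs ! a) (zs ! b) \<le> hamming (take (length zs) ws ! a) (take (length zs) ws ! b)"
      using hm[of a b] by simp
  qed
  show "feasible_pop n E k (take (length zs) ws)"
    unfolding feasible_pop_def feasible_def
  proof
    fix x assume "x \<in> set (take (length zs) ws)"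
    then obtain i where "i < length zs" "x = ws ! i" using g
      by (auto simp: in_set_conv_nth)
    then show "vertex_cover n E x \<and> card x \<le> k" using okk by (auto simp: okw_def)
  qed
qed



lemma lb_return: "P x \<Longrightarrow> measure_pmf.prob (return_pmf x) {y. P y} \<ge> 1"
  by simp

lemma indep_list_length: "xs \<in> set_pmf (indep_list ps) \<Longrightarrow> length xs = length ps"
  by (induction ps arbitrary: xs) auto

lemma indep_good:
  assumes "length zs \<le> length ps" "finite A" "card A + k * length zs \<le> M" "0 \<le> c"
    "\<And>j B. j < length zs \<Longrightarrow> finite B \<Longrightarrow> card B \<le> M \<Longrightarrow>
        measure_pmf.prob (ps!j) {w. okw n E k (zs!j) w \<and> (w - zs!j) \<inter> B = {}} \<ge> c"
  shows "measure_pmf.prob (indep_list ps) {ws. good n E k A zs ws} \<ge> c ^ length zs"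
  using assms
proof (induction ps arbitrary: zs A)
  case Nil
  then show ?case by simp
next
  case (Cons p ps)
  show ?case
  proof (cases zs)
    case Nil
    then show ?thesis by simp
  next
    case (Cons z zs')
    have "measure_pmf.prob (bind_pmf p (\<lambda>x. bind_pmf (indep_list ps) (\<lambda>xs. return_pmf (x # xs))))
        {ws. good n E k A zs ws} \<ge> c * (c ^ length zs' * 1)"
    proof (rule lb_bind[where A = "{w. okw n E k z w \<and> (w - z) \<inter> A = {}}"])
      show "c \<le> measure_pmf.prob p {w. okw n E k z w \<and> (w - z) \<inter> A = {}}"
        using Cons.prems(5)[of 0 A] Cons.prems(2,3) Cons by simp
      show "0 \<le> c ^ length zs' * 1" using Cons.prems(4) by simp
    next
      fix w assume w: "w \<in> {w. okw n E k z w \<and> (w - z) \<inter> A = {}}"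
      then have fw: "finite w" "card w \<le> k" using vc_finite by (auto simp: okw_def)
      show "c ^ length zs' * 1 \<le> measure_pmf.prob (bind_pmf (indep_list ps) (\<lambda>xs. return_pmf (w # xs)))
          {ws. good n E k A zs ws}"
      proof (rule lb_bind[where A = "{ws. good n E k (A \<union> w) zs' ws}"])
        have "card (A \<union> w) \<le> card A + card w" by (rule card_Un_le)
        then have cA: "card (A \<union> w) + k * length zs' \<le> M" using fw Cons.prems(3) Cons by simp
        show "c ^ length zs' \<le> measure_pmf.prob (indep_list ps) {ws. good n E k (A \<union> w) zs' ws}"
        proof (rule Cons.IH)
          show "length zs' \<le> length ps" using Cons.prems(1) Cons by simp
          show "finite (A \<union> w)" using fw Cons.prems(2) by simp
          show "card (A \<union> w) + k * length zs' \<le> M" by (rule cA)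
          show "0 \<le> c" by (rule Cons.prems(4))
          fix j and B :: "nat set" assume "j < length zs'" "finite B" "card B \<le> M"
          then show "c \<le> measure_pmf.prob (ps ! j) {w. okw n E k (zs' ! j) w \<and> (w - zs' ! j) \<inter> B = {}}"
            using Cons.prems(5)[of "Suc j" B] Cons by simp
        qed
        show "0 \<le> (1::real)" by simp
        fix xs assume "xs \<in> {ws. good n E k (A \<union> w) zs' ws}"
        then show "1 \<le> measure_pmf.prob (return_pmf (w # xs)) {ws. good n E k A zs ws}"
          using w Cons by simp
      qed
    qed
    then show ?thesis using Cons by simp
  qed
qed

lemma run_Suc: "run step (Suc t) s0 = bind_pmf (run step t s0) step"
  unfolding run_def by simp

lemma run_bound:
  assumes inv: "\<And>s s'. I s \<Longrightarrow> s' \<in> set_pmf (step s) \<Longrightarrow> I s'"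
    and stay: "\<And>s s'. I s \<Longrightarrow> G s \<Longrightarrow> s' \<in> set_pmf (step s) \<Longrightarrow> G s'"
    and prog: "\<And>s. I s \<Longrightarrow> measure_pmf.prob (step s) {s. G s} \<ge> p"
    and s0: "I s0"
  shows "measure_pmf.prob (run step t s0) {s. \<not> G s} \<le> (1 - p) ^ t"
proof -
  have supp: "\<forall>s\<in>set_pmf (run step t s0). I s" for t
    by (induction t) (auto simp: run_Suc run_def[of _ 0] s0 dest: inv)
  have p1: "p \<le> 1" using prog[OF s0] measure_pmf.prob_le_1 order.trans by blast
  show ?thesis
  proof (induction t)
    case 0
    then show ?case by (simp add: run_def)
  next
    case (Suc t)
    have "measure_pmf.prob (run step (Suc t) s0) {s. \<not> G s}
        \<le> (1 - p) * measure_pmf.prob (run step t s0) {s. \<not> G s}"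
      unfolding run_Suc
    proof (rule ub_bind)
      show "0 \<le> 1 - p" using p1 by simp
    next
      fix x assume x: "x \<in> set_pmf (run step t s0)" "x \<in> {s. \<not> G s}"
      have "measure_pmf.prob (step x) {s. \<not> G s} = 1 - measure_pmf.prob (step x) {s. G s}"
        using measure_pmf.prob_compl[of "{s. G s}" "step x"] by (simp add: Compl_eq_Diff_UNIV[symmetric] Collect_neg_eq)
      then show "measure_pmf.prob (step x) {s. \<not> G s} \<le> 1 - p" using prog[of x] supp x by simp
    next
      fix x assume x: "x \<in> set_pmf (run step t s0)" "x \<notin> {s. \<not> G s}"
      then show "measure_pmf.prob (step x) {s. \<not> G s} = 0"
        using supp stay by (auto simp: measure_pmf_zero_iff)
    qed
    also have "\<dots> \<le> (1 - p) * (1 - p) ^ t"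
      using Suc p1 by (intro mult_left_mono) auto
    finally show ?case by simp
  qed
qed



definition finv :: "nat \<Rightarrow> nat \<Rightarrow> nat set \<Rightarrow> nat set \<Rightarrow> nat \<Rightarrow> nat set \<Rightarrow> bool" where
  "finv n k y B i w \<longleftrightarrow> y \<subseteq> w \<and> w \<subseteq> {..<n} \<and> card w \<le> k \<and> min k (card y + i) \<le> card w \<and> (w - y) \<inter> B = {}"

lemma fill_step_lb:
  assumes "finv n k y B i w" "k < n" "finite B" "card B \<le> M" "M \<le> n - k"
  shows "measure_pmf.prob (fill_step n k w) {w. finv n k y B (Suc i) w} \<ge> 1 - real M / real (n - k)"
proof (cases "card w < k")
  case True
  define R where "R = {..<n} - w"
  have wn: "w \<subseteq> {..<n}" and fw: "finite w" using assms(1) finite_subset unfolding finv_def by auto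
  have cR: "card R = n - card w" unfolding R_def using wn by (simp add: card_Diff_subset fw)
  then have cR2: "card R \<ge> n - k" using True by simp
  have Rne: "R \<noteq> {}" using cR True assms(2) by auto
  have fR: "finite R" unfolding R_def by simp
  have fs: "fill_step n k w = map_pmf (\<lambda>u. insert u w) (pmf_of_set R)"
    unfolding fill_step_def R_def using True Rne R_def by simp
  have sub: "R - B \<subseteq> R \<inter> ((\<lambda>u. insert u w) -` {w. finv n k y B (Suc i) w})"
  proof
    fix u assume u: "u \<in> R - B"
    then have "u \<notin> w" "u < n" unfolding R_def by auto
    then have "card (insert u w) = Suc (card w)" using fw by simp
    then show "u \<in> R \<inter> ((\<lambda>u. insert u w) -` {w. finv n k y B (Suc i) w})"
      using u assms(1) True unfolding finv_def R_def by auto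
  qed
  have "card R - M \<le> card (R - B)"
    using diff_card_le_card_Diff[OF assms(3), of R] assms(4) by linarith
  also have "\<dots> \<le> card (R \<inter> ((\<lambda>u. insert u w) -` {w. finv n k y B (Suc i) w}))"
    using sub fR by (intro card_mono) auto
  finally have c1: "card R - M \<le> card (R \<inter> ((\<lambda>u. insert u w) -` {w. finv n k y B (Suc i) w}))" .
  have pos: "real (n - k) > 0" using assms(2) by simp
  have "1 - real M / real (n - k) \<le> 1 - real M / real (card R)"
    using cR2 pos by (intro diff_left_mono divide_left_mono) auto
  also have "\<dots> = real (card R - M) / real (card R)"
    using cR2 assms(5) pos by (simp add: field_simps of_nat_diff)
  also have "\<dots> \<le> real (card (R \<inter> ((\<lambda>u. insert u w) -` {w. finv n k y B (Suc i) w}))) / real (card R)"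
    using c1 by (intro divide_right_mono) auto
  also have "\<dots> = measure_pmf.prob (fill_step n k w) {w. finv n k y B (Suc i) w}"
    unfolding fs using Rne fR by (simp add: measure_pmf_of_set)
  finally show ?thesis .
next
  case False
  then have fs: "fill_step n k w = return_pmf w" unfolding fill_step_def by simp
  have "finv n k y B (Suc i) w" using assms(1) False unfolding finv_def by auto
  then have e: "measure_pmf.prob (fill_step n k w) {w. finv n k y B (Suc i) w} = 1" using fs by simp
  show ?thesis by (subst e) simp
qed

lemma fill_iter:
  assumes "y \<subseteq> {..<n}" "card y \<le> k" "k < n" "finite B" "card B \<le> M" "M \<le> n - k"
  shows "measure_pmf.prob (((\<lambda>p. bind_pmf p (fill_step n k)) ^^ i) (return_pmf y)) {w. finv n k y B i w}
     \<ge> (1 - real M / real (n - k)) ^ i"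
proof (induction i)
  case 0
  have "finv n k y B 0 y" using assms unfolding finv_def by auto
  then show ?case by simp
next
  case (Suc i)
  have q0: "0 \<le> 1 - real M / real (n - k)" using assms(3,6) by (simp add: field_simps)
  have "measure_pmf.prob (bind_pmf (((\<lambda>p. bind_pmf p (fill_step n k)) ^^ i) (return_pmf y)) (fill_step n k))
      {w. finv n k y B (Suc i) w} \<ge> (1 - real M / real (n - k)) ^ i * (1 - real M / real (n - k))"
    by (rule lb_bind[OF Suc q0]) (use fill_step_lb assms in auto)
  then show ?case by (simp add: mult.commute)
qed

lemma fill_lb:
  assumes "y \<subseteq> {..<n}" "card y \<le> k" "k < n" "finite B" "card B \<le> M" "M \<le> n - k"
  shows "measure_pmf.prob (fill n k y) {w. y \<subseteq> w \<and> w \<subseteq> {..<n} \<and> card w = k \<and> (w - y) \<inter> B = {}}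
     \<ge> (1 - real M / real (n - k)) ^ k"
proof -
  have "{w. finv n k y B k w} \<subseteq> {w. y \<subseteq> w \<and> w \<subseteq> {..<n} \<and> card w = k \<and> (w - y) \<inter> B = {}}"
    unfolding finv_def by auto
  from order.trans[OF fill_iter[OF assms, of k] measure_pmf.finite_measure_mono[OF this]]
  show ?thesis unfolding fill_def by simp
qed



lemma jr_lb:
  assumes gr: "graph n E" and x: "vertex_cover n E x" "card x \<le> k"
    and z: "vertex_cover n E z" "card z \<le> k"
    and "k < n" "finite B" "card B \<le> M" "M \<le> n - k"
  shows "measure_pmf.prob (jump_repair n E k x) {w. okw n E k z w \<and> (w - z) \<inter> B = {}}
     \<ge> (1/2) ^ k * (1 - real M / real (n - k)) ^ k"
proof -
  define g where "g = (\<lambda>v. v \<in> x \<and> v \<notin> z)"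
  have fx: "finite x" using x vc_finite by blast
  have jr: "jump_repair n E k x = bind_pmf (Pi_pmf x False (\<lambda>_. bernoulli_pmf (1/2)))
      (\<lambda>f. fill n k ((x - {v \<in> x. f v}) \<union> {u. \<exists>v\<in>{v \<in> x. f v}. {u, v} \<in> E}))"
    unfolding jump_repair_def Let_def by simp
  show ?thesis unfolding jr
  proof (rule lb_bind[where A = "{g}"])
    have "measure_pmf.prob (Pi_pmf x False (\<lambda>_. bernoulli_pmf (1/2))) {g} = (1/2) ^ card x"
      unfolding measure_pmf_single using fx
      by (subst pmf_Pi') (auto simp: g_def)
    moreover have "(1/2::real) ^ k \<le> (1/2) ^ card x"
      using x(2) by (intro power_decreasing) auto
    ultimately show "(1/2::real) ^ k \<le> measure_pmf.prob (Pi_pmf x False (\<lambda>_. bernoulli_pmf (1/2))) {g}"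
      by simp
    show "0 \<le> (1 - real M / real (n - k)) ^ k"
      using assms(6,9) by (simp add: field_simps)
  next
    fix f assume "f \<in> {g}"
    then have f: "f = g" by simp
    define y where "y = (x - {v \<in> x. f v}) \<union> {u. \<exists>v\<in>{v \<in> x. f v}. {u, v} \<in> E}"
    have yz: "y \<subseteq> z"
    proof
      fix u assume "u \<in> y"
      then consider "u \<in> x" "u \<in> z" | v where "v \<in> x" "v \<notin> z" "{u, v} \<in> E"
        unfolding y_def f g_def by auto
      then show "u \<in> z"
      proof cases
        case (2 v)
        then have "{u, v} \<inter> z \<noteq> {}" using z unfolding vertex_cover_def by blast
        then show ?thesis using 2 by auto
      qed
    qed
    have ycov: "e \<inter> y \<noteq> {}" if e: "e \<in> E" for e
    proof -
      obtain a b where ab: "e = {a, b}" using gr e unfolding graph_def by blast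
      have "e \<inter> x \<noteq> {}" using x e unfolding vertex_cover_def by blast
      then obtain v where v: "v \<in> e" "v \<in> x" by blast
      show ?thesis
      proof (cases "v \<in> z")
        case True
        then have "v \<in> y" using v unfolding y_def f g_def by auto
        then show ?thesis using v by blast
      next
        case False
        obtain u where u: "e = {u, v}" using ab v by auto
        then have "u \<in> y" using v False e unfolding y_def f g_def by auto
        then show ?thesis using u by blast
      qed
    qed
    have zn: "z \<subseteq> {..<n}" "finite z" using z vc_finite unfolding vertex_cover_def by auto
    have yn: "y \<subseteq> {..<n}" using yz zn by blast
    have cy: "card y \<le> k" using card_mono[OF zn(2) yz] z(2) by simp
    have sub: "{w. y \<subseteq> w \<and> w \<subseteq> {..<n} \<and> card w = k \<and> (w - y) \<inter> B = {}}
        \<subseteq> {w. okw n E k z w \<and> (w - z) \<inter> B = {}}"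
    proof
      fix w assume "w \<in> {w. y \<subseteq> w \<and> w \<subseteq> {..<n} \<and> card w = k \<and> (w - y) \<inter> B = {}}"
      then have w: "y \<subseteq> w" "w \<subseteq> {..<n}" "card w = k" "(w - y) \<inter> B = {}" by auto
      have "okw n E k z w" unfolding okw_def vertex_cover_def
        using w z(2) ycov by blast
      moreover have "(w - z) \<inter> B = {}" using w yz by blast
      ultimately show "w \<in> {w. okw n E k z w \<and> (w - z) \<inter> B = {}}" by simp
    qed
    from order.trans[OF fill_lb[OF yn cy assms(6-9)] measure_pmf.finite_measure_mono[OF sub]]
    show "(1 - real M / real (n - k)) ^ k
        \<le> measure_pmf.prob (fill n k ((x - {v \<in> x. f v}) \<union> {u. \<exists>v\<in>{v \<in> x. f v}. {u, v} \<in> E}))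
           {w. okw n E k z w \<and> (w - z) \<inter> B = {}}"
      unfolding y_def by simp
  qed
qed



lemma prob_one: "set_pmf p \<subseteq> X \<Longrightarrow> measure_pmf.prob p X = 1"
proof -
  assume "set_pmf p \<subseteq> X"
  then have "measure_pmf.prob p (UNIV - X) = 0" by (auto simp: measure_pmf_zero_iff)
  moreover have "measure_pmf.prob p (UNIV - X) = 1 - measure_pmf.prob p X"
    using measure_pmf.prob_compl[of X p] by simp
  ultimately show ?thesis by simp
qed

lemma exists_opt:
  assumes "feasible_pop n E K P"
  shows "\<exists>Q. length Q = length P \<and> optimal_diversity n E K Q"
proof -
  define S where "S = {Q. length Q = length P \<and> feasible_pop n E K Q}"
  have "S \<subseteq> {Q. set Q \<subseteq> Pow {..<n} \<and> length Q = length P}"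
    unfolding S_def feasible_pop_def feasible_def vertex_cover_def by auto
  then have fS: "finite S" using finite_lists_length_eq[of "Pow {..<n}" "length P"] finite_subset by auto
  have "P \<in> S" using assms unfolding S_def by simp
  then have "Max (diversity ` S) \<in> diversity ` S" using fS by (intro Max_in) auto
  then obtain Q where Q: "Q \<in> S" "diversity Q = Max (diversity ` S)" by auto
  have "\<forall>Q'\<in>S. diversity Q' \<le> diversity Q" using Q fS by simp
  then show ?thesis using Q unfolding S_def optimal_diversity_def by auto
qed

lemma select_set:
  assumes "Q0 \<in> select_candidates n E k m Pool"
  shows "\<forall>R\<in>set_pmf (select n E k m Pool). R \<in> select_candidates n E k m Pool \<and> diversity Q0 \<le> diversity R"
proof -
  let ?C = "select_candidates n E k m Pool"
  have "?C \<subseteq> {Q. set Q \<subseteq> set Pool \<and> length Q = m}"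
    unfolding select_candidates_def by (auto dest!: set_mset_mono)
  then have fC: "finite ?C" using finite_lists_length_eq[of "set Pool" m] finite_subset by auto
  have "Max (diversity ` ?C) \<in> diversity ` ?C" using fC assms by (intro Max_in) auto
  then obtain Q where Q: "Q \<in> ?C" "diversity Q = Max (diversity ` ?C)" by auto
  define M where "M = {Q \<in> ?C. \<forall>Q'\<in>?C. diversity Q' \<le> diversity Q}"
  have "Q \<in> M" using Q fC unfolding M_def by simp
  moreover have "finite M" using fC unfolding M_def by simp
  ultimately have "set_pmf (select n E k m Pool) = M" unfolding select_def M_def[symmetric]
    by (intro set_pmf_of_set) auto
  then show ?thesis using assms unfolding M_def by auto
qed

lemma card_A0:
  assumes "length Q = m" "feasible_pop n E K Q"
  shows "card (\<Union>(set Q)) \<le> K * m" "finite (\<Union>(set Q))"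
proof -
  have "card (\<Union>(set Q)) \<le> sum card (set Q)" by (rule card_Union_le_sum_card)
  also have "\<dots> \<le> card (set Q) * K"
    using assms(2) sum_bounded_above[of "set Q" card K] by (auto simp: feasible_pop_def feasible_def)
  also have "\<dots> \<le> m * K" using card_length[of Q] assms(1) by simp
  finally show "card (\<Union>(set Q)) \<le> K * m" by (simp add: mult.commute)
  show "finite (\<Union>(set Q))" using assms(2) vc_finite by (auto simp: feasible_pop_def feasible_def intro!: finite_Union)
qed



lemma progress:
  assumes gr: "graph n E" and Kn: "K < n" and Mn: "2*K*m \<le> n - K"
    and P: "length P = m" "feasible_pop n E K P" and m: "0 < m" "m \<le> lam"
  shows "measure_pmf.prob (step_one n E K P) {Q. optimal_diversity n E K Q}
           \<ge> ((1/2)^K * (1 - real (2*K*m) / real (n - K))^K) ^ m"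
    "measure_pmf.prob (step_plus n E K lam P) {Q. optimal_diversity n E K Q}
           \<ge> ((1/2)^K * (1 - real (2*K*m) / real (n - K))^K) ^ m"
proof -
  define c where "c = (1/2::real)^K * (1 - real (2*K*m) / real (n - K))^K"
  define M where "M = 2*K*m"
  obtain Qs where Qs: "length Qs = m" "optimal_diversity n E K Qs"
    using exists_opt[OF P(2)] P(1) by auto
  have Qsf: "feasible_pop n E K Qs" using Qs unfolding optimal_diversity_def by simp
  define A0 where "A0 = \<Union>(set Qs)"
  have A0: "finite A0" "card A0 + K * length Qs \<le> M"
    using card_A0[OF Qs(1) Qsf] Qs(1) unfolding A0_def M_def by auto
  have "real (2*K*m) \<le> real (n - K)" using Mn by (simp only: of_nat_le_iff)
  then have "real (2*K*m) / real (n - K) \<le> 1" using Kn by (simp add: divide_le_eq_1 del: of_nat_mult of_nat_diff)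
  then have c0: "0 \<le> c" unfolding c_def by simp
  have jr_ok: "c \<le> measure_pmf.prob (jump_repair n E K x) {w. okw n E K (Qs!j) w \<and> (w - Qs!j) \<inter> B = {}}"
    if "x \<in> set P" "j < length Qs" "finite B" "card B \<le> M" for x j B
  proof -
    have "feasible n E K x" using P(2) that(1) unfolding feasible_pop_def by simp
    moreover have "feasible n E K (Qs!j)" using Qsf that(2) unfolding feasible_pop_def by simp
    ultimately show ?thesis unfolding c_def
      using jr_lb[OF gr _ _ _ _ Kn that(3) that(4)[unfolded M_def] Mn] unfolding feasible_def by blast
  qed
  have G: "diversity Qs \<le> diversity (take m ws) \<and> feasible_pop n E K (take m ws) \<and> length (take m ws) = m"
    if "good n E K A0 Qs ws" for ws
    using good_diversity[OF that] Qs(1) Qsf vc_finite unfolding A0_def feasible_pop_def feasible_def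
    by blast
  have opt: "optimal_diversity n E K R"
    if "length R = m" "feasible_pop n E K R" "diversity Qs \<le> diversity R" for R
    using Qs that unfolding optimal_diversity_def by force
  have DP: "diversity P \<le> diversity Qs" using Qs P unfolding optimal_diversity_def by simp
  have "c ^ m * 1 \<le> measure_pmf.prob (step_one n E K P) {Q. optimal_diversity n E K Q}"
    unfolding step_one_def
  proof (rule lb_bind[where A = "{ws. good n E K A0 Qs ws}"])
    show "c ^ m \<le> measure_pmf.prob (indep_list (map (jump_repair n E K) P)) {ws. good n E K A0 Qs ws}"
      using indep_good[where ps = "map (jump_repair n E K) P" and zs = Qs, OF _ A0 c0] Qs(1) P(1) jr_ok
      by (simp add: nth_mem)
    show "0 \<le> (1::real)" by simp
    fix ws assume ws: "ws \<in> set_pmf (indep_list (map (jump_repair n E K) P))" "ws \<in> {ws. good n E K A0 Qs ws}"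
    have "length ws = m" using indep_list_length[OF ws(1)] P(1) by simp
    then have "diversity Qs \<le> diversity ws" "feasible_pop n E K ws" using G[of ws] ws(2) by auto
    then show "1 \<le> measure_pmf.prob (return_pmf (if feasible_pop n E K ws \<and> diversity P \<le> diversity ws then ws else P))
          {Q. optimal_diversity n E K Q}"
      using DP opt[of ws] \<open>length ws = m\<close> by simp
  qed
  then show "measure_pmf.prob (step_one n E K P) {Q. optimal_diversity n E K Q} \<ge> c ^ m" by simp
  define pe where "pe = do { i \<leftarrow> pmf_of_set {..<length P}; jump_repair n E K (P ! i) }"
  have pe_ok: "c \<le> measure_pmf.prob pe {w. okw n E K (Qs!j) w \<and> (w - Qs!j) \<inter> B = {}}"
    if "j < length Qs" "finite B" "card B \<le> M" for j B
  proof -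
    have "1 * c \<le> measure_pmf.prob pe {w. okw n E K (Qs!j) w \<and> (w - Qs!j) \<inter> B = {}}"
      unfolding pe_def
    proof (rule lb_bind[where A = UNIV, OF _ c0])
      show "1 \<le> measure_pmf.prob (pmf_of_set {..<length P}) UNIV" by simp
      fix i assume "i \<in> set_pmf (pmf_of_set {..<length P})"
      moreover have "{..<length P} \<noteq> {}" using P(1) m(1) by auto
      ultimately have "i < length P" using set_pmf_of_set[of "{..<length P}"] by auto
      then show "c \<le> measure_pmf.prob (jump_repair n E K (P ! i)) {w. okw n E K (Qs!j) w \<and> (w - Qs!j) \<inter> B = {}}"
        using jr_ok[OF _ that] by (simp add: nth_mem)
    qed
    then show ?thesis by simp
  qed
  have "c ^ m * 1 \<le> measure_pmf.prob (step_plus n E K lam P) {Q. optimal_diversity n E K Q}"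
    unfolding step_plus_def pe_def[symmetric]
  proof (rule lb_bind[where A = "{ws. good n E K A0 Qs ws}"])
    show "c ^ m \<le> measure_pmf.prob (indep_list (replicate lam pe)) {ws. good n E K A0 Qs ws}"
      using indep_good[where ps = "replicate lam pe" and zs = Qs, OF _ A0 c0] Qs(1) m(2) pe_ok
      by simp
    show "0 \<le> (1::real)" by simp
    fix ws assume ws: "ws \<in> set_pmf (indep_list (replicate lam pe))" "ws \<in> {ws. good n E K A0 Qs ws}"
    have G': "diversity Qs \<le> diversity (take m ws)" "feasible_pop n E K (take m ws)" "length (take m ws) = m"
      using G[of ws] ws(2) by auto
    have "mset (take m ws) \<subseteq># mset ws"
      by (metis append_take_drop_id mset_append mset_subset_eq_add_left)
    also have "mset ws \<subseteq># mset (P @ ws)" by (simp add: mset_subset_eq_add_right)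
    finally have "take m ws \<in> select_candidates n E K (length P) (P @ ws)"
      unfolding select_candidates_def using G' P(1) by simp
    note S = select_set[OF this]
    have "set_pmf (select n E K (length P) (P @ ws)) \<subseteq> {Q. optimal_diversity n E K Q}"
    proof
      fix R assume R: "R \<in> set_pmf (select n E K (length P) (P @ ws))"
      then have "R \<in> select_candidates n E K (length P) (P @ ws)" "diversity (take m ws) \<le> diversity R"
        using S by auto
      then show "R \<in> {Q. optimal_diversity n E K Q}"
        using opt[of R] G' P(1) unfolding select_candidates_def by auto
    qed
    then show "1 \<le> measure_pmf.prob (select n E K (length P) (P @ ws)) {Q. optimal_diversity n E K Q}"
      by (simp add: prob_one)
  qed
  then show "measure_pmf.prob (step_plus n E K lam P) {Q. optimal_diversity n E K Q} \<ge> c ^ m" by simp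
qed



lemma step_one_inv:
  assumes "s' \<in> set_pmf (step_one n E K P)"
  shows "length s' = length P \<and> (feasible_pop n E K P \<longrightarrow> feasible_pop n E K s')
     \<and> (optimal_diversity n E K P \<longrightarrow> optimal_diversity n E K s')"
proof -
  obtain P' where P': "P' \<in> set_pmf (indep_list (map (jump_repair n E K) P))"
    and s': "s' = (if feasible_pop n E K P' \<and> diversity P' \<ge> diversity P then P' else P)"
    using assms unfolding step_one_def by auto
  have l: "length P' = length P" using indep_list_length[OF P'] by simp
  show ?thesis
  proof (cases "feasible_pop n E K P' \<and> diversity P' \<ge> diversity P")
    case True
    then show ?thesis using s' l unfolding optimal_diversity_def by force
  qed (use s' in auto)
qed

lemma step_plus_inv:
  assumes "s' \<in> set_pmf (step_plus n E K lam P)" "feasible_pop n E K P"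
  shows "length s' = length P \<and> feasible_pop n E K s'
     \<and> (optimal_diversity n E K P \<longrightarrow> optimal_diversity n E K s')"
proof -
  obtain Off where s': "s' \<in> set_pmf (select n E K (length P) (P @ Off))"
    using assms unfolding step_plus_def by auto
  have "P \<in> select_candidates n E K (length P) (P @ Off)"
    unfolding select_candidates_def using assms(2) by (simp add: mset_subset_eq_add_left)
  from select_set[OF this] s' have "s' \<in> select_candidates n E K (length P) (P @ Off)"
    "diversity P \<le> diversity s'" by auto
  then show ?thesis unfolding select_candidates_def optimal_diversity_def by force
qed

lemma arith_main:
  fixes K m n :: nat
  assumes K: "K > 0" and m: "m > 0" and n: "n > 0" and e: "4 * real ((K * m)^2) / real n < 1"
  shows "K < n" "2*K*m \<le> n - K"
    "(1/2)^(K*m) * (1 - 4 * real ((K * m)^2) / real n)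
       \<le> ((1/2)^K * (1 - real (2*K*m) / real (n - K))^K) ^ m"
proof -
  define a where "a = K * m"
  have a1: "1 \<le> a" "K \<le> a" using K m unfolding a_def by auto
  have "4 * real (a^2) < real n" using e n unfolding a_def by (simp add: pos_divide_less_eq)
  then have "real (4 * a^2) < real n" by simp
  then have na: "4 * a^2 < n" by (simp only: of_nat_less_iff)
  have "a \<le> a^2" using a1 by (simp add: power2_eq_square)
  then show Kn: "K < n" "2*K*m \<le> n - K" using na a1 unfolding a_def by linarith+
  have rn: "real (n - K) = real n - real K" using Kn by simp
  have nK: "real n - real K > 0" using Kn by simp
  have "2*a \<le> n - K" using Kn unfolding a_def by simp
  then have "real (2*a) \<le> real (n - K)" by (simp only: of_nat_le_iff)
  then have x1: "real (2*a) / real (n - K) \<le> 1" using Kn by (simp add: divide_le_eq_1 del: of_nat_mult of_nat_diff)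
  have "1 + real a * (- (real (2*a) / real (n - K))) \<le> (1 + - (real (2*a) / real (n - K))) ^ a"
    by (rule Bernoulli_inequality) (use x1 in simp)
  moreover have "1 - 4 * real (a^2) / real n \<le> 1 + real a * (- (real (2*a) / real (n - K)))"
  proof -
    have "2 * K \<le> n" using na a1 \<open>a \<le> a^2\<close> by linarith
    then have "real (2 * K) \<le> real n" by (simp only: of_nat_le_iff)
    then have "2 * real K \<le> real n" by simp
    then have "real a * real (2*a) * real n \<le> 4 * real (a^2) * (real n - real K)"
    proof -
      have h: "(real a)^2 * (2 * real K) \<le> (real a)^2 * real n"
        using \<open>2 * real K \<le> real n\<close> by (intro mult_left_mono) auto
      have e1: "real a * real (2*a) * real n = 2 * ((real a)^2 * real n)"
        by (simp add: power2_eq_square)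
      have e2: "4 * real (a^2) * (real n - real K) = 4 * ((real a)^2 * real n) - 2 * ((real a)^2 * (2 * real K))"
        by (simp add: algebra_simps)
      show ?thesis unfolding e1 e2 using h by linarith
    qed
    then have "real a * real (2*a) / (real n - real K) \<le> 4 * real (a^2) / real n"
      using n nK by (simp add: divide_simps)
    then show ?thesis unfolding rn by simp
  qed
  ultimately have "1 - 4 * real (a^2) / real n \<le> (1 - real (2*a) / real (n - K)) ^ a" by simp
  then have "(1/2)^a * (1 - 4 * real (a^2) / real n) \<le> (1/2)^a * (1 - real (2*a) / real (n - K)) ^ a"
    by (intro mult_left_mono) auto
  also have "\<dots> = ((1/2)^K * (1 - real (2*K*m) / real (n - K))^K) ^ m"
    unfolding a_def by (simp add: power_mult_distrib power_mult mult.assoc)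
  finally show "(1/2)^(K*m) * (1 - 4 * real ((K * m)^2) / real n)
       \<le> ((1/2)^K * (1 - real (2*K*m) / real (n - K))^K) ^ m" unfolding a_def .
qed



theorem theorem1:
  fixes k \<mu> lam :: "nat \<Rightarrow> nat"
  assumes k_pos: "\<And>n. k n > 0"
    and \<mu>_pos: "\<And>n. \<mu> n > 0"
    and lam_ge: "\<And>n. lam n \<ge> \<mu> n"
    and small: "(\<lambda>n. real (k n * \<mu> n)) \<in> o(\<lambda>n. sqrt (real n))"
  shows "\<exists>\<epsilon> :: nat \<Rightarrow> real. \<epsilon> \<longlonglongrightarrow> 0 \<and>
    (\<forall>n E P. graph n E \<and> (\<exists>C. vertex_cover n E C \<and> card C \<le> k n)
       \<and> length P = \<mu> n \<and> feasible_pop n E (k n) P \<longrightarrow>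
      (let p = (1/2) ^ (k n * \<mu> n) * (1 - \<epsilon> n) in
        measure_pmf.prob (step_one n E (k n) P) {Q. optimal_diversity n E (k n) Q} \<ge> p
      \<and> measure_pmf.prob (step_plus n E (k n) (lam n) P) {Q. optimal_diversity n E (k n) Q} \<ge> p
      \<and> (\<forall>t. measure_pmf.prob (run (step_one n E (k n)) t P)
               {Q. \<not> optimal_diversity n E (k n) Q} \<le> (1 - p) ^ t)
      \<and> (\<forall>t. measure_pmf.prob (run (step_plus n E (k n) (lam n)) t P)
               {Q. \<not> optimal_diversity n E (k n) Q} \<le> (1 - p) ^ t)))"
proof -
  define \<epsilon> where "\<epsilon> = (\<lambda>n::nat. if n = 0 then 1 else 4 * real ((k n * \<mu> n)^2) / real n)"
  have lim0: "(\<lambda>n. real (k n * \<mu> n) / sqrt (real n)) \<longlonglongrightarrow> 0"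
    using smalloD_tendsto[OF small] by simp
  have "(\<lambda>n. 4 * ((real (k n * \<mu> n) / sqrt (real n)) * (real (k n * \<mu> n) / sqrt (real n)))) \<longlonglongrightarrow> 4 * (0 * 0)"
    by (intro tendsto_intros lim0)
  moreover have "eventually (\<lambda>n. 4 * ((real (k n * \<mu> n) / sqrt (real n)) * (real (k n * \<mu> n) / sqrt (real n))) = \<epsilon> n) sequentially"
    unfolding eventually_sequentially
  proof (intro exI allI impI)
    fix n :: nat assume "1 \<le> n"
    then show "4 * ((real (k n * \<mu> n) / sqrt (real n)) * (real (k n * \<mu> n) / sqrt (real n))) = \<epsilon> n"
      unfolding \<epsilon>_def by (simp add: power2_eq_square)
  qed
  ultimately have lim: "\<epsilon> \<longlonglongrightarrow> 0" by (simp add: tendsto_cong)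
  show ?thesis
  proof (intro exI conjI allI impI)
    show "\<epsilon> \<longlonglongrightarrow> 0" by (rule lim)
  next
    fix n E P
    assume H: "graph n E \<and> (\<exists>C. vertex_cover n E C \<and> card C \<le> k n) \<and> length P = \<mu> n \<and> feasible_pop n E (k n) P"
    define K where "K = k n"
    define m where "m = \<mu> n"
    define p where "p = (1/2::real) ^ (K * m) * (1 - \<epsilon> n)"
    have gr: "graph n E" and P: "length P = m" "feasible_pop n E K P" using H unfolding K_def m_def by auto
    have K0: "K > 0" and m0: "m > 0" and lm: "m \<le> lam n" unfolding K_def m_def using k_pos \<mu>_pos lam_ge by auto
    define I where "I = (\<lambda>Q. length Q = m \<and> feasible_pop n E K Q)"
    have goal: "measure_pmf.prob (step_one n E K P) {Q. optimal_diversity n E K Q} \<ge> p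
      \<and> measure_pmf.prob (step_plus n E K (lam n) P) {Q. optimal_diversity n E K Q} \<ge> p
      \<and> (\<forall>t. measure_pmf.prob (run (step_one n E K) t P)
               {Q. \<not> optimal_diversity n E K Q} \<le> (1 - p) ^ t)
      \<and> (\<forall>t. measure_pmf.prob (run (step_plus n E K (lam n)) t P)
               {Q. \<not> optimal_diversity n E K Q} \<le> (1 - p) ^ t)"
    proof (cases "\<epsilon> n < 1")
      case False
      then have "1 - \<epsilon> n \<le> 0" by simp
      then have p0: "p \<le> 0" unfolding p_def by (intro mult_nonneg_nonpos) auto
      have "1 \<le> (1 - p) ^ t" for t using p0 by (simp add: one_le_power)
      then have b: "measure_pmf.prob q X \<le> (1 - p) ^ t" for q :: "nat set list pmf" and X t
        using measure_pmf.prob_le_1 order_trans by blast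
      have a: "p \<le> measure_pmf.prob q X" for q :: "nat set list pmf" and X
        using p0 measure_nonneg order_trans by blast
      show ?thesis using a b by blast
    next
      case True
      then have n0: "n > 0" unfolding \<epsilon>_def by (cases "n = 0") auto
      have e: "4 * real ((K * m)^2) / real n < 1" using True n0 unfolding \<epsilon>_def K_def m_def by simp
      note ar = arith_main[OF K0 m0 n0 e]
      have peq: "p = (1/2)^(K*m) * (1 - 4 * real ((K * m)^2) / real n)"
        unfolding p_def \<epsilon>_def K_def m_def using n0 by simp
      have prog1: "measure_pmf.prob (step_one n E K Q) {Q. optimal_diversity n E K Q} \<ge> p"
        and prog2: "measure_pmf.prob (step_plus n E K (lam n) Q) {Q. optimal_diversity n E K Q} \<ge> p"
        if "I Q" for Q
        using progress[OF gr ar(1) ar(2) _ _ m0 lm, of Q] that ar(3) unfolding I_def peq by auto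
      have IP: "I P" using P unfolding I_def by simp
      have r1: "measure_pmf.prob (run (step_one n E K) t P) {Q. \<not> optimal_diversity n E K Q} \<le> (1 - p) ^ t" for t
      proof (rule run_bound[where I = I, OF _ _ _ IP])
        fix s s' assume "I s" "s' \<in> set_pmf (step_one n E K s)"
        then show "I s'" using step_one_inv[of s' n E K s] unfolding I_def by auto
      next
        fix s s' assume "I s" "optimal_diversity n E K s" "s' \<in> set_pmf (step_one n E K s)"
        then show "optimal_diversity n E K s'" using step_one_inv[of s' n E K s] by auto
      next
        fix s assume "I s" then show "p \<le> measure_pmf.prob (step_one n E K s) {s. optimal_diversity n E K s}"
          by (rule prog1)
      qed
      have r2: "measure_pmf.prob (run (step_plus n E K (lam n)) t P) {Q. \<not> optimal_diversity n E K Q} \<le> (1 - p) ^ t" for t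
      proof (rule run_bound[where I = I, OF _ _ _ IP])
        fix s s' assume "I s" "s' \<in> set_pmf (step_plus n E K (lam n) s)"
        then show "I s'" using step_plus_inv[of s' n E K "lam n" s] unfolding I_def by auto
      next
        fix s s' assume "I s" "optimal_diversity n E K s" "s' \<in> set_pmf (step_plus n E K (lam n) s)"
        then show "optimal_diversity n E K s'" using step_plus_inv[of s' n E K "lam n" s] unfolding I_def by auto
      next
        fix s assume "I s" then show "p \<le> measure_pmf.prob (step_plus n E K (lam n) s) {s. optimal_diversity n E K s}"
          by (rule prog2)
      qed
      show ?thesis using prog1[OF IP] prog2[OF IP] r1 r2 by blast
    qed
    then show "let p = (1/2) ^ (k n * \<mu> n) * (1 - \<epsilon> n) in
        measure_pmf.prob (step_one n E (k n) P) {Q. optimal_diversity n E (k n) Q} \<ge> p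
      \<and> measure_pmf.prob (step_plus n E (k n) (lam n) P) {Q. optimal_diversity n E (k n) Q} \<ge> p
      \<and> (\<forall>t. measure_pmf.prob (run (step_one n E (k n)) t P)
               {Q. \<not> optimal_diversity n E (k n) Q} \<le> (1 - p) ^ t)
      \<and> (\<forall>t. measure_pmf.prob (run (step_plus n E (k n) (lam n)) t P)
               {Q. \<not> optimal_diversity n E (k n) Q} \<le> (1 - p) ^ t)"
      unfolding Let_def p_def K_def m_def .
  qed
qed

end
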